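(* Let $n\geq1$ and let $H$ be an irreducible subgroup of $SL(n,\mathbb{C})$. Then $|Z_n(H)|$ divides $n^2$. Moreover, $Z_n(H)$ is an irreducible subgroup of $PSL(n,\mathbb{C})$ if and only if $|Z_n(H)|=n^2$.
   Context: Let $\xi=e^{2\pi i/n}$; the center of $SL(n,\mathbb{C})$ is $\langle \xi I_n\rangle$, and $\pi_n:SL(n,\mathbb{C})\to PSL(n,\mathbb{C})$ is the quotient map. A subgroup $H\le SL(n,\mathbb{C})$ is irreducible if no nonzero proper subspace of $\mathbb{C}^n$ is $H$-invariant; a subgroup of $PSL(n,\mathbb{C})$ is irreducible if its preimage under $\pi_n$ is. $Z_n(H)$ denotes the centralizer of $\pi_n(H)$ in $PSL(n,\mathbb{C})$. *)

theory Defs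
  imports "HOL-Analysis.Analysis"
begin

text \<open>n x n complex matrices, with n = CARD('n) (arbitrary, >= 1 automatically).\<close>

definition SL :: "(complex^'n^'n) set" where
  "SL = {A. det A = 1}"

definition xi :: "'n::finite itself \<Rightarrow> complex" where
  "xi _ = cis (2 * pi / real CARD('n))"

definition center_SL :: "(complex^'n::finite^'n) set" where
  "center_SL = {mat (xi TYPE('n) ^ k) | k. k < CARD('n)}"

text \<open>Quotient map SL(n,C) -> PSL(n,C); elements of PSL are cosets of the center.\<close>
definition piPSL :: "complex^'n::finite^'n \<Rightarrow> (complex^'n^'n) set" where
  "piPSL A = (\<lambda>Z. Z ** A) ` center_SL"

definition PSL :: "(complex^'n::finite^'n) set set" where
  "PSL = piPSL ` SL"

definition csubspace :: "(complex^'n) set \<Rightarrow> bool" where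
  "csubspace V \<longleftrightarrow> 0 \<in> V \<and> (\<forall>x\<in>V. \<forall>y\<in>V. x + y \<in> V) \<and> (\<forall>c. \<forall>x\<in>V. c *s x \<in> V)"

definition irreducible_mats :: "(complex^'n^'n) set \<Rightarrow> bool" where
  "irreducible_mats H \<longleftrightarrow>
     \<not> (\<exists>V. csubspace V \<and> V \<noteq> {0} \<and> V \<noteq> UNIV \<and> (\<forall>A\<in>H. \<forall>v\<in>V. A *v v \<in> V))"

definition subgroup_SL :: "(complex^'n::finite^'n) set \<Rightarrow> bool" where
  "subgroup_SL H \<longleftrightarrow> H \<subseteq> SL \<and> mat 1 \<in> H \<and> (\<forall>A\<in>H. \<forall>B\<in>H. A ** B \<in> H)
     \<and> (\<forall>A\<in>H. matrix_inv A \<in> H)"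

definition irreducible_PSL :: "(complex^'n::finite^'n) set set \<Rightarrow> bool" where
  "irreducible_PSL K \<longleftrightarrow> irreducible_mats {A\<in>SL. piPSL A \<in> K}"

text \<open>Z_n(H): centralizer of pi(H) in PSL; the product in PSL is pi A * pi B = pi (A B).\<close>
definition Zn :: "(complex^'n::finite^'n) set \<Rightarrow> (complex^'n^'n) set set" where
  "Zn H = {piPSL A | A. A \<in> SL \<and> (\<forall>h\<in>H. piPSL (A ** h) = piPSL (h ** A))}"

end

theory Submission imports Defs "HOL-Computational_Algebra.Fundamental_Theorem_Algebra" begin

definition cpoly :: "complex^'n::finite^'n \<Rightarrow> complex poly" where
 "cpoly M = (\<Sum>p | p permutes (UNIV::'n set). smult (of_int (sign p))
     (\<Prod>i\<in>UNIV. [: M$i$(p i), if p i = i then -1 else 0 :]))"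

lemma poly_cpoly: "poly (cpoly M) x = det (M - mat x)"
  unfolding cpoly_def det_def
  by (auto simp add: poly_sum poly_prod mat_def algebra_simps intro!: sum.cong prod.cong)

lemma mat_mult_vec: "mat c *v v = c *s (v::'a::comm_ring_1^'n)"
  by (simp add: vec_eq_iff matrix_vector_mult_def mat_def if_distrib if_distribR sum.delta cong: if_cong)

lemma coeff_cpoly: "coeff (cpoly (M::complex^'n::finite^'n)) CARD('n) = (-1)^CARD('n)"
proof -
  let ?t = "\<lambda>p. (\<Prod>i\<in>(UNIV::'n set). [: M$i$(p i), if p i = i then -1 else (0::complex) :])"
  have other: "coeff (?t p) CARD('n) = 0" if "p \<noteq> id" for p
  proof -
    obtain j where j: "p j \<noteq> j" using \<open>p \<noteq> id\<close> by (auto simp: fun_eq_iff)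
    have "degree (?t p) \<le> (\<Sum>i\<in>UNIV. degree [: M$i$(p i), if p i = i then -1 else (0::complex) :])"
      using degree_prod_sum_le[OF finite_class.finite_UNIV, where f = "\<lambda>i. [: M$i$(p i), if p i = i then -1 else (0::complex) :]"]
      by (simp only: o_def)
    also have "\<dots> \<le> (\<Sum>i\<in>UNIV - {j}. 1)"
    proof -
      have "(\<Sum>i\<in>UNIV. degree [: M$i$(p i), if p i = i then -1 else (0::complex) :])
          = (\<Sum>i\<in>UNIV - {j}. degree [: M$i$(p i), if p i = i then -1 else (0::complex) :])"
        using j by (intro sum.mono_neutral_right) auto
      also have "\<dots> \<le> (\<Sum>i\<in>UNIV - {j}. 1)"
        by (intro sum_mono) auto
      finally show ?thesis .
    qed
    also have "\<dots> < CARD('n)" by (simp add: card_Diff_singleton)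
    finally show ?thesis by (intro coeff_eq_0) auto
  qed
  have idc: "coeff (?t id) CARD('n) = (-1)^CARD('n)"
  proof -
    have d: "degree (?t id) = CARD('n)"
      by (subst degree_prod_sum_eq) auto
    have lc: "lead_coeff (?t id) = (-1)^CARD('n)"
      by (simp only: lead_coeff_prod) simp
    show ?thesis using lc unfolding d .
  qed
  have "coeff (cpoly M) CARD('n) = (\<Sum>p | p permutes (UNIV::'n set). of_int (sign p) * coeff (?t p) CARD('n))"
    unfolding cpoly_def coeff_sum by simp
  also have "\<dots> = (\<Sum>p | p permutes (UNIV::'n set). if p = id then (-1)^CARD('n) else 0)"
    by (intro sum.cong refl) (auto simp: other idc[simplified] sign_id)
  also have "\<dots> = (-1)^CARD('n)"
    by (simp add: sum.delta' permutes_id)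
  finally show ?thesis .
qed

lemma eigen_exists: "\<exists>c v. v \<noteq> 0 \<and> (M::complex^'n::finite^'n) *v v = c *s v"
proof -
  have "\<not> constant (poly (cpoly M))"
  proof
    assume "constant (poly (cpoly M))"
    hence "degree (cpoly M) = 0" by (simp add: constant_degree)
    moreover have "CARD('n) \<le> degree (cpoly M)"
      by (rule le_degree) (simp add: coeff_cpoly)
    ultimately show False by simp
  qed
  then obtain x where "poly (cpoly M) x = 0" using fundamental_theorem_of_algebra by blast
  hence d: "det (matrix ((*v) (M - mat x))) = 0" by (simp add: poly_cpoly matrix_of_matrix_vector_mul)
  have "\<not> inj ((*v) (M - mat x))"
    using det_nz_iff_inj_gen[OF matrix_vector_mul_linear_gen] d by blast
  then obtain u w where uw: "u \<noteq> w" "(M - mat x) *v u = (M - mat x) *v w"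
    by (auto simp: inj_def)
  hence "(M - mat x) *v (u - w) = 0" by (simp add: matrix_vector_mult_diff_distrib)
  hence "M *v (u - w) = x *s (u - w)" by (simp add: matrix_vector_mult_diff_rdistrib mat_mult_vec)
  with uw show ?thesis by (metis right_minus_eq)
qed

lemma mvs: "(M::'a::comm_ring_1^'n^'m) *v (d *s w) = d *s (M *v w)"
  by (simp add: vec_eq_iff matrix_vector_mult_def sum_distrib_left algebra_simps)

lemma schur:
  fixes H :: "(complex^'n::finite^'n) set"
  assumes irr: "irreducible_mats H" and comm: "\<And>h. h \<in> H \<Longrightarrow> h ** M = M ** h"
  shows "\<exists>c. M = mat c"
proof -
  obtain c v where cv: "v \<noteq> 0" "M *v v = c *s v" using eigen_exists by blast
  define V where "V = {w. M *v w = c *s w}"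
  have sub: "csubspace V" unfolding csubspace_def V_def
    by (auto simp: matrix_vector_right_distrib mvs algebra_simps)
  have inv: "\<forall>A\<in>H. \<forall>w\<in>V. A *v w \<in> V"
  proof (intro ballI)
    fix A w assume A: "A \<in> H" and w: "w \<in> V"
    have "M *v (A *v w) = (M ** A) *v w" by (simp add: matrix_vector_mul_assoc)
    also have "\<dots> = A *v (M *v w)" using comm[OF A] by (simp add: matrix_vector_mul_assoc)
    also have "\<dots> = c *s (A *v w)" using w by (simp add: V_def mvs)
    finally show "A *v w \<in> V" by (simp add: V_def)
  qed
  have "V \<noteq> {0}" using cv by (auto simp: V_def)
  with irr sub inv have "V = UNIV" unfolding irreducible_mats_def by blast
  hence "\<forall>w. M *v w = mat c *v w" by (auto simp: V_def mat_mult_vec)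
  thus ?thesis by (auto simp: matrix_eq)
qed

lemma additive_sum:
  fixes g :: "'a::field^'m \<Rightarrow> 'a"
  assumes add: "\<And>x y. g (x + y) = g x + g y" and sc: "\<And>c x. g (c *s x) = c * g x"
  shows "finite S \<Longrightarrow> g (\<Sum>i\<in>S. h i) = (\<Sum>i\<in>S. g (h i))"
proof (induction S rule: finite_induct)
  case empty
  have "g 0 = g (0 *s 0)" by simp
  also have "\<dots> = 0" by (simp only: sc) simp
  finally show ?case by simp
next
  case (insert x F) thus ?case by (simp add: add)
qed

lemma trace_idem:
  fixes f :: "'a::field^'m \<Rightarrow> 'a^'m"
  assumes lin: "Vector_Spaces.linear (*s) (*s) f" and idem: "\<And>x. f (f x) = f x"
  shows "(\<Sum>i\<in>UNIV. f (axis i 1) $ i) = of_nat (vec.dim (range f))"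
proof -
  obtain B where B: "B \<subseteq> range f" "vec.independent B" "range f \<subseteq> vec.span B" "card B = vec.dim (range f)"
    using vec.basis_exists by blast
  have fin: "finite B" using B(2) vec.independent_bound_general by blast
  have fb: "f b = b" if "b \<in> B" for b using B(1) that idem by auto
  define rp where "rp x b = vec.representation B (f x) b" for x b
  have sp: "f x \<in> vec.span B" for x using B(3) by auto
  have expand: "f x = (\<Sum>b\<in>B. rp x b *s b)" for x
    unfolding rp_def using vec.sum_representation_eq[OF B(2) sp fin order_refl] by simp
  have radd: "rp (x + y) b = rp x b + rp y b" for x y b
    unfolding rp_def using vec.representation_add[OF B(2) sp sp] vec.linear_add[OF lin] by simp
  have rsc: "rp (c *s x) b = c * rp x b" for c x b
    unfolding rp_def using vec.representation_scale[OF B(2) sp] vec.linear_scale[OF lin] by simp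
  have "(\<Sum>i\<in>UNIV. f (axis i 1) $ i) = (\<Sum>i\<in>UNIV. \<Sum>b\<in>B. rp (axis i 1) b * b $ i)"
    by (subst expand) (simp add: sum_component)
  also have "\<dots> = (\<Sum>b\<in>B. \<Sum>i\<in>UNIV. b $ i * rp (axis i 1) b)"
    by (subst sum.swap) (simp add: mult.commute)
  also have "\<dots> = (\<Sum>b\<in>B. rp (\<Sum>i\<in>UNIV. b $ i *s axis i 1) b)"
  proof (intro sum.cong refl)
    fix b
    show "(\<Sum>i\<in>UNIV. b $ i * rp (axis i 1) b) = rp (\<Sum>i\<in>UNIV. b $ i *s axis i 1) b"
      by (subst additive_sum[where g = "\<lambda>x. rp x b"]) (auto simp: radd rsc)
  qed
  also have "\<dots> = (\<Sum>b\<in>B. 1)"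
  proof (intro sum.cong refl)
    fix b assume b: "b \<in> B"
    show "rp (\<Sum>i\<in>UNIV. b $ i *s axis i 1) b = 1"
      unfolding basis_expansion rp_def fb[OF b] vec.representation_basis[OF B(2) b] by simp
  qed
  also have "\<dots> = of_nat (vec.dim (range f))" using B(4) by simp
  finally show ?thesis .
qed

lemma mat_entry: "(mat c ** A) $ i $ j = (c::'a::comm_semiring_1) * A $ i $ j"
proof -
  have "(mat c ** A) $ i $ j = (\<Sum>k\<in>UNIV. (mat c) $ i $ k * A $ k $ j)"
    by (simp add: matrix_matrix_mult_def)
  also have "\<dots> = (\<Sum>k\<in>UNIV. if k = i then c * A $ k $ j else 0)"
    by (rule sum.cong) (auto simp: mat_def)
  also have "\<dots> = c * A $ i $ j" by simp
  finally show ?thesis .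
qed
lemma mat_entry2: "(A ** mat c) $ i $ j = A $ i $ j * (c::'a::comm_semiring_1)"
proof -
  have "(A ** mat c) $ i $ j = (\<Sum>k\<in>UNIV. A $ i $ k * (mat c) $ k $ j)"
    by (simp add: matrix_matrix_mult_def)
  also have "\<dots> = (\<Sum>k\<in>UNIV. if k = j then A $ i $ k * c else 0)"
    by (rule sum.cong) (auto simp: mat_def)
  also have "\<dots> = A $ i $ j * c" by simp
  finally show ?thesis .
qed
lemma matmat: "mat a ** mat b = mat (a*b :: 'a::comm_semiring_1)"
  by (simp add: vec_eq_iff mat_entry) (simp add: mat_def)
lemma mat_comm: "mat c ** A = A ** mat (c::'a::comm_semiring_1)"
  by (simp add: vec_eq_iff mat_entry mat_entry2 mult.commute)

lemma pull: "A ** (mat c ** B) = mat (c::'a::comm_semiring_1) ** (A ** B)"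
proof -
  have "A ** (mat c ** B) = (A ** mat c) ** B" by (rule matrix_mul_assoc)
  also have "A ** mat c = mat c ** A" by (rule mat_comm[symmetric])
  finally show ?thesis by (simp add: matrix_mul_assoc)
qed

lemma det_mat: "det (mat c :: 'a::comm_ring_1^'n::finite^'n) = c ^ CARD('n)"
  by (subst det_diagonal) (auto simp: mat_def)

lemma center_eq: "(center_SL :: (complex^'n::finite^'n) set) = {mat c | c. c ^ CARD('n) = 1}"
proof -
  have "(\<lambda>k. cis (2 * pi * real k / real CARD('n))) ` {..<CARD('n)} = {z. z ^ CARD('n) = 1}"
    using Complex.bij_betw_roots_unity[of "CARD('n)"] by (simp add: bij_betw_def)
  moreover have "xi TYPE('n) ^ k = cis (2 * pi * real k / real CARD('n))" for k
    unfolding xi_def Complex.DeMoivre by (rule arg_cong[where f=cis]) simp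
  ultimately have e: "(\<lambda>k. xi TYPE('n) ^ k) ` {..<CARD('n)} = {z. z ^ CARD('n) = 1}" by simp
  have "(center_SL :: (complex^'n::finite^'n) set) = mat ` ((\<lambda>k. xi TYPE('n) ^ k) ` {..<CARD('n)})"
    unfolding center_SL_def by auto
  also have "\<dots> = {mat c | c. c ^ CARD('n) = 1}" unfolding e by auto
  finally show ?thesis .
qed

lemma inv_props:
  fixes A :: "'a::field^'n::finite^'n"
  assumes "det A \<noteq> 0" shows "A ** matrix_inv A = mat 1 \<and> matrix_inv A ** A = mat 1"
proof -
  have "invertible A" using assms invertible_det_nz by blast
  thus ?thesis unfolding invertible_def matrix_inv_def by (rule someI_ex)
qed

lemma inv_unique:
  fixes A :: "'a::field^'n::finite^'n"
  assumes "A ** B = mat 1" "B ** A = mat 1" shows "matrix_inv A = B"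
proof -
  have i: "invertible A" using assms unfolding invertible_def by blast
  hence "A ** matrix_inv A = mat 1 \<and> matrix_inv A ** A = mat 1"
    unfolding invertible_def matrix_inv_def by (rule someI_ex)
  hence "A ** matrix_inv A = mat 1" "matrix_inv A ** A = mat 1" by auto
  hence "matrix_inv A = (B ** A) ** matrix_inv A" using assms by simp
  also have "\<dots> = B" using \<open>A ** matrix_inv A = mat 1\<close> by (simp add: matrix_mul_assoc[symmetric])
  finally show ?thesis .
qed

lemma root_nz: "(c::complex) ^ CARD('n::finite) = 1 \<Longrightarrow> c \<noteq> 0"
  using zero_less_card_finite[where 'a='n] by (cases "c = 0") (simp_all add: power_0_left)

lemma piPSL_eq:
  fixes A B :: "complex^'n::finite^'n"
  shows "piPSL A = piPSL B \<longleftrightarrow> (\<exists>c. c ^ CARD('n) = 1 \<and> A = mat c ** B)"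
proof
  assume "piPSL A = piPSL B"
  moreover have "A \<in> piPSL A" unfolding piPSL_def center_eq by (auto intro!: image_eqI[where x = "mat 1"])
  ultimately show "\<exists>c. c ^ CARD('n) = 1 \<and> A = mat c ** B" unfolding piPSL_def center_eq by auto
next
  assume "\<exists>c. c ^ CARD('n) = 1 \<and> A = mat c ** B"
  then obtain c where c: "c ^ CARD('n) = 1" "A = mat c ** B" by blast
  have cn: "c \<noteq> 0" using c(1) by (rule root_nz)
  show "piPSL A = piPSL B"
  proof
    show "piPSL A \<subseteq> piPSL B"
      unfolding piPSL_def center_eq using c
      by (auto simp: matrix_mul_assoc matmat power_mult_distrib intro!: image_eqI)
    show "piPSL B \<subseteq> piPSL A"
    proof
      fix X assume "X \<in> piPSL B"
      then obtain d where d: "d ^ CARD('n) = 1" "X = mat d ** B" unfolding piPSL_def center_eq by auto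
      have "X = mat (d / c) ** A" using d c cn by (simp add: matrix_mul_assoc matmat)
      moreover have "(d/c) ^ CARD('n) = 1" using d c by (simp add: power_divide)
      ultimately show "X \<in> piPSL A" unfolding piPSL_def center_eq by auto
    qed
  qed
qed


lemma trace_scal: "trace (mat c ** A) = (c::'a::comm_semiring_1) * trace (A::'a^'n::finite^'n)"
  by (simp add: trace_def mat_entry sum_distrib_left)

lemma SL_det: "A \<in> SL \<longleftrightarrow> det A = 1" by (simp add: SL_def)

definition flat :: "complex^'n::finite^'n \<Rightarrow> complex^('n\<times>'n)" where
  "flat M = (\<chi> p. M $ fst p $ snd p)"

lemma inj_flat: "inj flat"
proof
  fix M M' :: "complex^'n::finite^'n" assume "flat M = flat M'"
  hence "M $ i $ j = M' $ i $ j" for i j by (auto simp: flat_def vec_eq_iff dest: spec[of _ "(i,j)"])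
  thus "M = M'" by (simp add: vec_eq_iff)
qed

lemma matrix_add_rdist: "((B + C) ** A) = (B ** A) + (C ** (A::'a::semiring_1^'n^'m))"
  by (simp add: matrix_matrix_mult_def vec_eq_iff sum.distrib distrib_right)

lemma mm_sum_left: "finite S \<Longrightarrow> (X::'a::semiring_1^'n^'m) ** (\<Sum>z\<in>S. f z) = (\<Sum>z\<in>S. X ** f z)"
  by (induction S rule: finite_induct) (auto simp: matrix_add_ldistrib)

lemma mm_sum_right: "finite S \<Longrightarrow> (\<Sum>z\<in>S. f z) ** (X::'a::semiring_1^'n^'m) = (\<Sum>z\<in>S. f z ** X)"
  by (induction S rule: finite_induct) (auto simp: matrix_add_rdist)

definition unflat :: "complex^('n::finite\<times>'n) \<Rightarrow> complex^'n^'n" where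
  "unflat x = (\<chi> i j. x $ (i,j))"

lemma flat_unflat: "flat (unflat x) = x"
  by (simp add: flat_def unflat_def vec_eq_iff)

lemma unflat_flat: "unflat (flat M) = M"
  by (simp add: flat_def unflat_def vec_eq_iff)

lemma unflat_add: "unflat (x + y) = unflat x + unflat y"
  by (simp add: unflat_def vec_eq_iff)

lemma flat_add: "flat (M + N) = flat M + flat N"
  by (simp add: flat_def vec_eq_iff)

lemma unflat_scal: "unflat (c *s x) = mat c ** unflat x"
  by (simp add: unflat_def vec_eq_iff mat_entry)

lemma flat_scal: "flat (mat c ** M) = c *s flat M"
  by (simp add: flat_def vec_eq_iff mat_entry)

lemma E_entry: "(X ** unflat (axis (i,j) 1) ** Y) $ i $ j = X $ i $ i * (Y $ j $ j :: complex)"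
proof -
  let ?E = "unflat (axis (i,j) (1::complex))"
  have E: "?E $ k $ l = (if k = i \<and> l = j then 1 else 0)" for k l
    by (simp add: unflat_def axis_def)
  have XE: "(X ** ?E) $ a $ l = (if l = j then X $ a $ i else 0)" for a l
  proof -
    have "(X ** ?E) $ a $ l = (\<Sum>k\<in>UNIV. X $ a $ k * ?E $ k $ l)" by (simp add: matrix_matrix_mult_def)
    also have "\<dots> = (\<Sum>k\<in>UNIV. if k = i then (if l = j then X $ a $ i else 0) else 0)"
      by (rule sum.cong) (auto simp: E)
    also have "\<dots> = (if l = j then X $ a $ i else 0)" by simp
    finally show ?thesis .
  qed
  have "(X ** ?E ** Y) $ i $ j = (\<Sum>l\<in>UNIV. (X ** ?E) $ i $ l * Y $ l $ j)" by (simp add: matrix_matrix_mult_def)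
  also have "\<dots> = (\<Sum>l\<in>UNIV. if l = j then X $ i $ i * Y $ j $ j else 0)"
    by (rule sum.cong) (auto simp: XE)
  also have "\<dots> = X $ i $ i * Y $ j $ j" by simp
  finally show ?thesis .
qed

lemma csub_sum: assumes "csubspace V"
  shows "finite S \<Longrightarrow> (\<forall>z\<in>S. f z \<in> V) \<Longrightarrow> sum f S \<in> V"
  by (induction S rule: finite_induct) (use assms in \<open>auto simp: csubspace_def\<close>)

lemma flat_mat1_nz: "flat (mat 1 :: complex^'n::finite^'n) \<noteq> 0"
proof
  assume "flat (mat 1 :: complex^'n::finite^'n) = 0"
  hence "flat (mat 1 :: complex^'n::finite^'n) $ (i,i) = 0" for i by simp
  thus False by (simp add: flat_def mat_def)
qed

locale irrgrp =
  fixes H :: "(complex^'n::finite^'n) set"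
  assumes sg: "subgroup_SL H" and irr: "irreducible_mats H"
begin

definition Zt :: "(complex^'n^'n) set" where
  "Zt = {A \<in> SL. \<forall>h\<in>H. piPSL (A ** h) = piPSL (h ** A)}"

lemma Zn_eq: "Zn H = piPSL ` Zt"
  unfolding Zn_def Zt_def by auto

lemma Zt_iff: "A \<in> Zt \<longleftrightarrow> det A = 1 \<and> (\<forall>h\<in>H. \<exists>c. c ^ CARD('n) = 1 \<and> A ** h = mat c ** (h ** A))"
  unfolding Zt_def SL_det piPSL_eq by auto

lemma H_det: "h \<in> H \<Longrightarrow> det h = 1"
  using sg unfolding subgroup_SL_def SL_def by auto

lemma Zt_det: "A \<in> Zt \<Longrightarrow> det A = 1" using Zt_iff by blast

lemma Zt_inv_props: "A \<in> Zt \<Longrightarrow> A ** matrix_inv A = mat 1 \<and> matrix_inv A ** A = mat 1"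
  using inv_props Zt_det by force

lemma H_inv_props: "h \<in> H \<Longrightarrow> h ** matrix_inv h = mat 1 \<and> matrix_inv h ** h = mat 1"
  using inv_props H_det by force

lemma Zt_one: "mat 1 \<in> Zt"
  unfolding Zt_iff by (auto intro!: exI[of _ 1])

lemma Zt_scal: assumes A: "A \<in> Zt" and c: "c ^ CARD('n) = 1" shows "mat c ** A \<in> Zt"
  unfolding Zt_iff
proof (intro conjI ballI)
  show "det (mat c ** A) = 1" using A c by (simp add: det_mul det_mat Zt_det)
  fix h assume h: "h \<in> H"
  then obtain d where d: "d ^ CARD('n) = 1" "A ** h = mat d ** (h ** A)" using A Zt_iff by blast
  have "mat c ** A ** h = mat c ** (mat d ** (h ** A))" using d by (simp add: matrix_mul_assoc[symmetric])
  also have "\<dots> = mat d ** (h ** (mat c ** A))"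
    by (simp only: pull[of h c A]) (simp add: matrix_mul_assoc matmat mult.commute)
  finally show "\<exists>e. e ^ CARD('n) = 1 \<and> mat c ** A ** h = mat e ** (h ** (mat c ** A))" using d by blast
qed

lemma Zt_mult: assumes A: "A \<in> Zt" and B: "B \<in> Zt" shows "A ** B \<in> Zt"
  unfolding Zt_iff
proof (intro conjI ballI)
  show "det (A ** B) = 1" using A B by (simp add: det_mul Zt_det)
  fix h assume h: "h \<in> H"
  obtain c where c: "c ^ CARD('n) = 1" "A ** h = mat c ** (h ** A)" using A Zt_iff h by blast
  obtain d where d: "d ^ CARD('n) = 1" "B ** h = mat d ** (h ** B)" using B Zt_iff h by blast
  have "A ** B ** h = A ** (mat d ** (h ** B))" using d by (simp add: matrix_mul_assoc[symmetric])
  also have "\<dots> = mat d ** ((A ** h) ** B)"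
    by (simp only: pull[of A d]) (simp add: matrix_mul_assoc)
  also have "\<dots> = mat d ** (mat c ** (h ** A) ** B)" using c by simp
  also have "\<dots> = mat (d * c) ** (h ** (A ** B))" by (simp add: matrix_mul_assoc matmat)
  finally show "\<exists>e. e ^ CARD('n) = 1 \<and> A ** B ** h = mat e ** (h ** (A ** B))"
    using c d by (metis power_mult_distrib mult_1)
qed

lemma Zt_inv: assumes A: "A \<in> Zt" shows "matrix_inv A \<in> Zt"
  unfolding Zt_iff
proof (intro conjI ballI)
  let ?B = "matrix_inv A"
  have i: "A ** ?B = mat 1" "?B ** A = mat 1" using Zt_inv_props A by auto
  have "det A * det ?B = 1" using i det_mul[of A ?B] by simp
  thus "det ?B = 1" using A Zt_det by simp
  fix h assume h: "h \<in> H"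
  obtain c where c: "c ^ CARD('n) = 1" "A ** h = mat c ** (h ** A)" using A Zt_iff h by blast
  have cn: "c \<noteq> 0" using c(1) by (rule root_nz)
  have "h ** ?B = ?B ** (A ** h) ** ?B" using i by (simp add: matrix_mul_assoc)
  also have "\<dots> = ?B ** (mat c ** (h ** A)) ** ?B" using c by simp
  also have "\<dots> = mat c ** (?B ** h)" using i
    by (simp only: pull[of ?B c]) (simp add: matrix_mul_assoc[symmetric])
  finally have "mat (1/c) ** (h ** ?B) = mat (1/c) ** (mat c ** (?B ** h))" by simp
  hence "?B ** h = mat (1/c) ** (h ** ?B)" using cn by (simp add: matrix_mul_assoc matmat)
  moreover have "(1/c) ^ CARD('n) = 1" using c by (simp add: power_divide)
  ultimately show "\<exists>e. e ^ CARD('n) = 1 \<and> ?B ** h = mat e ** (h ** ?B)" by blast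
qed

lemma Zt_mat: "mat c \<in> Zt \<Longrightarrow> c ^ CARD('n) = 1"
  using Zt_det det_mat by metis

lemma tr0: assumes A: "A \<in> Zt" and ns: "\<not> (\<exists>c. A = mat c)" shows "trace A = 0"
proof -
  have "\<exists>h\<in>H. h ** A \<noteq> A ** h"
    using schur[OF irr, of A] ns by blast
  then obtain h where h: "h \<in> H" "h ** A \<noteq> A ** h" by blast
  obtain c where c: "c ^ CARD('n) = 1" "A ** h = mat c ** (h ** A)" using A Zt_iff h by blast
  have c1: "c \<noteq> 1" using c h by auto
  let ?hi = "matrix_inv h"
  have hi: "h ** ?hi = mat 1" "?hi ** h = mat 1" using H_inv_props h(1) by auto
  have "trace A = trace ((A ** h) ** ?hi)" using hi by (simp add: matrix_mul_assoc[symmetric])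
  also have "\<dots> = trace (?hi ** (A ** h))" by (rule trace_mul_sym)
  also have "\<dots> = trace (mat c ** ((?hi ** h) ** A))" using c
    by (simp only: pull[of ?hi c]) (simp add: matrix_mul_assoc)
  also have "\<dots> = c * trace A" using hi by (simp add: trace_scal)
  finally have "(1 - c) * trace A = 0" by (simp add: algebra_simps)
  thus ?thesis using c1 by simp
qed


definition rep :: "(complex^'n^'n) set \<Rightarrow> complex^'n^'n" where
  "rep z = (SOME A. A \<in> Zt \<and> piPSL A = z)"

lemma rep: "z \<in> Zn H \<Longrightarrow> rep z \<in> Zt \<and> piPSL (rep z) = z"
  unfolding rep_def Zn_eq by (rule someI_ex) auto

lemma class_triv: "A \<in> Zt \<Longrightarrow> (piPSL A = piPSL (mat 1) \<longleftrightarrow> (\<exists>c. A = mat c))"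
  using Zt_mat by (auto simp: piPSL_eq)

lemma trace_mm: "trace (X ** Y) = (\<Sum>i\<in>UNIV. \<Sum>k\<in>UNIV. X$i$k * Y$k$i)"
  by (simp add: trace_def matrix_matrix_mult_def)

lemma biorth:
  assumes z: "z \<in> Zn H" and w: "w \<in> Zn H"
  shows "trace (matrix_inv (rep z) ** rep w) = (if z = w then of_nat CARD('n) else 0)"
proof (cases "z = w")
  case True thus ?thesis using Zt_inv_props[of "rep z"] rep[OF z] by (simp add: trace_I)
next
  case False
  let ?X = "matrix_inv (rep z) ** rep w"
  have X: "?X \<in> Zt" using rep[OF z] rep[OF w] Zt_inv Zt_mult by blast
  have "\<not> (\<exists>c. ?X = mat c)"
  proof
    assume "\<exists>c. ?X = mat c"
    then obtain c where c: "?X = mat c" by blast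
    have cr: "c ^ CARD('n) = 1" using X c Zt_mat by simp
    have "rep z ** ?X = rep w" using Zt_inv_props[of "rep z"] rep[OF z]
      by (simp add: matrix_mul_assoc)
    hence "rep w = mat c ** rep z" using c by (metis mat_comm)
    hence "piPSL (rep w) = piPSL (rep z)" using cr by (auto simp: piPSL_eq)
    thus False using rep[OF z] rep[OF w] False by simp
  qed
  thus ?thesis using tr0[OF X] False by simp
qed

lemma rep_inj: "inj_on rep (Zn H)"
  by (metis inj_onI rep)

lemma indep:
  assumes S: "finite S" "S \<subseteq> Zn H"
  shows "vec.independent (flat ` rep ` S)"
  unfolding vec.independent_explicit
proof (intro conjI allI impI ballI)
  show "finite (flat ` rep ` S)" using S by simp
  fix c v
  assume sum0: "(\<Sum>v\<in>flat ` rep ` S. c v *s v) = 0" and v: "v \<in> flat ` rep ` S"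
  have inj: "inj_on (flat \<circ> rep) S" using inj_flat rep_inj S(2)
    by (metis comp_inj_on inj_on_subset subset_UNIV)
  define d where "d z = c (flat (rep z))" for z
  have "(\<Sum>z\<in>S. d z *s flat (rep z)) = 0"
    using sum0 sum.reindex[OF inj, of "\<lambda>v. c v *s v"] by (simp add: d_def image_comp)
  hence e: "(\<Sum>z\<in>S. d z * rep z $ k $ i) = 0" for k i
    by (auto simp: vec_eq_iff sum_component flat_def dest: spec[of _ "(k,i)"])
  obtain w where w: "w \<in> S" "v = flat (rep w)" using v by auto
  let ?M = "matrix_inv (rep w)"
  have s0: "(\<Sum>z\<in>S. d z * (?M$i$k * rep z $k$i)) = 0" for i k
  proof -
    have "(\<Sum>z\<in>S. d z * (?M$i$k * rep z $k$i)) = ?M$i$k * (\<Sum>z\<in>S. d z * rep z $ k $ i)"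
      by (simp add: sum_distrib_left algebra_simps)
    thus ?thesis by (simp add: e)
  qed
  have "(\<Sum>z\<in>S. d z * trace (?M ** rep z)) = (\<Sum>z\<in>S. \<Sum>i\<in>UNIV. \<Sum>k\<in>UNIV. d z * (?M$i$k * rep z$k$i))"
    by (simp add: trace_mm sum_distrib_left)
  also have "\<dots> = (\<Sum>i\<in>UNIV. \<Sum>k\<in>UNIV. \<Sum>z\<in>S. d z * (?M$i$k * rep z$k$i))"
    by (subst sum.swap) (rule sum.cong[OF refl], rule sum.swap)
  also have "\<dots> = 0" by (simp add: s0)
  finally have "0 = (\<Sum>z\<in>S. d z * trace (matrix_inv (rep w) ** rep z))" by simp
  also have "\<dots> = (\<Sum>z\<in>S. if z = w then d z * of_nat CARD('n) else 0)"
  proof (intro sum.cong refl)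
    fix z assume z: "z \<in> S"
    hence "z \<in> Zn H" "w \<in> Zn H" using S w by auto
    thus "d z * trace (matrix_inv (rep w) ** rep z) = (if z = w then d z * of_nat CARD('n) else 0)"
      using biorth[of w z] by auto
  qed
  also have "\<dots> = d w * of_nat CARD('n)" using S w by simp
  finally show "c v = 0" using w by (simp add: d_def)
qed

lemma card_le: assumes S: "finite S" "S \<subseteq> Zn H" shows "card S \<le> CARD('n) * CARD('n)"
proof -
  have inj: "inj_on (flat \<circ> rep) S" using inj_flat rep_inj S(2)
    by (metis comp_inj_on inj_on_subset subset_UNIV)
  have "card S = card (flat ` rep ` S)" using card_image[OF inj] by (simp add: image_comp)
  also have "\<dots> \<le> vec.dim (flat ` rep ` S)" using vec.independent_bound_general[OF indep[OF S]] by simp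
  also have "\<dots> \<le> card (cart_basis :: (complex^('n\<times>'n)) set)"
    using vec.dim_subset_UNIV vec.dimension_def by metis
  also have "\<dots> = CARD('n) * CARD('n)" by (simp add: card_cart_basis)
  finally show ?thesis .
qed

lemma Zn_finite: "finite (Zn H)"
proof (rule ccontr)
  assume "infinite (Zn H)"
  then obtain S where "S \<subseteq> Zn H" "finite S" "card S = CARD('n) * CARD('n) + 1"
    using infinite_arbitrarily_large by blast
  thus False using card_le by fastforce
qed


lemma Zn_ne: "piPSL (mat 1) \<in> Zn H" using Zt_one Zn_eq by auto

lemma inv_scal: assumes A: "A \<in> Zt" and c: "c \<noteq> 0"
  shows "matrix_inv (mat c ** A) = mat (inverse c) ** matrix_inv A"
proof (rule inv_unique)
  have i: "A ** matrix_inv A = mat 1" "matrix_inv A ** A = mat 1" using Zt_inv_props[OF A] by auto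
  show "(mat c ** A) ** (mat (inverse c) ** matrix_inv A) = mat 1"
    by (simp only: pull[of "mat c ** A"]) (simp add: matrix_mul_assoc[symmetric] i matmat c)
  show "(mat (inverse c) ** matrix_inv A) ** (mat c ** A) = mat 1"
    by (simp only: pull[of "mat (inverse c) ** matrix_inv A"]) (simp add: matrix_mul_assoc[symmetric] i matmat c)
qed

definition conj :: "complex^'n^'n \<Rightarrow> complex^'n^'n \<Rightarrow> complex^'n^'n" where
  "conj X M = X ** M ** matrix_inv X"

lemma conj_same: assumes A: "A \<in> Zt" and B: "B \<in> Zt" and e: "piPSL A = piPSL B"
  shows "conj A M = conj B M"
proof -
  obtain c where c: "c ^ CARD('n) = 1" "A = mat c ** B" using e piPSL_eq by blast
  have cn: "c \<noteq> 0" using c(1) by (rule root_nz)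
  have "conj A M = (mat c ** B) ** M ** (mat (inverse c) ** matrix_inv B)"
    unfolding conj_def c(2) inv_scal[OF B cn] ..
  also have "\<dots> = conj B M"
    by (simp only: pull[of "(mat c ** B) ** M"]) (simp add: matrix_mul_assoc matmat cn conj_def)
  finally show ?thesis .
qed

lemma conj_mult: assumes A: "A \<in> Zt" and B: "B \<in> Zt"
  shows "conj (A ** B) M = conj A (conj B M)"
proof -
  have iA: "A ** matrix_inv A = mat 1" "matrix_inv A ** A = mat 1" using Zt_inv_props[OF A] by auto
  have iB: "B ** matrix_inv B = mat 1" "matrix_inv B ** B = mat 1" using Zt_inv_props[OF B] by auto
  have "matrix_inv (A ** B) = matrix_inv B ** matrix_inv A"
  proof (rule inv_unique)
    have "(A ** B) ** (matrix_inv B ** matrix_inv A) = A ** (B ** matrix_inv B) ** matrix_inv A"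
      by (simp add: matrix_mul_assoc)
    thus "(A ** B) ** (matrix_inv B ** matrix_inv A) = mat 1" using iA iB by simp
    have "(matrix_inv B ** matrix_inv A) ** (A ** B) = matrix_inv B ** (matrix_inv A ** A) ** B"
      by (simp add: matrix_mul_assoc)
    thus "(matrix_inv B ** matrix_inv A) ** (A ** B) = mat 1" using iA iB by simp
  qed
  thus ?thesis unfolding conj_def by (simp add: matrix_mul_assoc)
qed

lemma conj_comm: assumes A: "A \<in> Zt" and M: "A ** M = M ** A" shows "conj A M = M"
  using Zt_inv_props[OF A] M unfolding conj_def by (simp add: matrix_mul_assoc[symmetric])

lemma conj_sum: "finite S \<Longrightarrow> conj X (\<Sum>z\<in>S. f z) = (\<Sum>z\<in>S. conj X (f z))"
  unfolding conj_def by (simp add: mm_sum_left mm_sum_right)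

definition P :: "complex^'n^'n \<Rightarrow> complex^'n^'n" where
  "P M = mat (1 / of_nat (card (Zn H))) ** (\<Sum>z\<in>Zn H. conj (rep z) M)"

definition C :: "(complex^'n^'n) set" where
  "C = {M. \<forall>A\<in>Zt. A ** M = M ** A}"

lemma card_pos: "card (Zn H) > 0" using Zn_finite Zn_ne card_gt_0_iff by blast

lemma P_in_C: "P M \<in> C"
  unfolding C_def
proof (intro CollectI ballI)
  fix A assume A: "A \<in> Zt"
  define phi where "phi z = piPSL (A ** rep z)" for z
  have phi_in: "phi ` Zn H \<subseteq> Zn H" unfolding phi_def Zn_eq using A rep Zt_mult Zn_eq by auto
  have phi_inj: "inj_on phi (Zn H)"
  proof
    fix z z' assume z: "z \<in> Zn H" and z': "z' \<in> Zn H" and e: "phi z = phi z'"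
    obtain c where c: "c ^ CARD('n) = 1" "A ** rep z = mat c ** (A ** rep z')"
      using e piPSL_eq unfolding phi_def by blast
    have iA: "matrix_inv A ** A = mat 1" using Zt_inv_props[OF A] by auto
    have "rep z = matrix_inv A ** (A ** rep z)" by (simp add: matrix_mul_assoc iA)
    also have "\<dots> = mat c ** rep z'"
      unfolding c(2) by (simp only: pull[of "matrix_inv A"]) (simp add: matrix_mul_assoc iA)
    finally have "piPSL (rep z) = piPSL (rep z')" using c(1) piPSL_eq by blast
    thus "z = z'" using rep z z' by simp
  qed
  have phi_bij: "phi ` Zn H = Zn H" using endo_inj_surj[OF Zn_finite phi_in phi_inj] .
  have "conj A (\<Sum>z\<in>Zn H. conj (rep z) M) = (\<Sum>z\<in>Zn H. conj (A ** rep z) M)"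
    using Zn_finite A rep by (simp add: conj_sum conj_mult)
  also have "\<dots> = (\<Sum>z\<in>Zn H. conj (rep (phi z)) M)"
  proof (intro sum.cong refl)
    fix z assume z: "z \<in> Zn H"
    have "phi z \<in> Zn H" using phi_in z by auto
    thus "conj (A ** rep z) M = conj (rep (phi z)) M"
      using conj_same[of "A ** rep z" "rep (phi z)"] rep z A Zt_mult unfolding phi_def by metis
  qed
  also have "\<dots> = (\<Sum>z\<in>phi ` Zn H. conj (rep z) M)"
    using sum.reindex[OF phi_inj, of "\<lambda>z. conj (rep z) M"] by simp
  also have "\<dots> = (\<Sum>z\<in>Zn H. conj (rep z) M)" using phi_bij by simp
  finally have cA: "conj A (P M) = P M"
    unfolding P_def conj_def by (simp only: pull[of A]) (simp add: matrix_mul_assoc[symmetric])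
  have iA: "matrix_inv A ** A = mat 1" using Zt_inv_props[OF A] by auto
  have "A ** P M = conj A (P M) ** A" unfolding conj_def
    by (simp add: matrix_mul_assoc[symmetric] iA)
  thus "A ** P M = P M ** A" using cA by simp
qed

lemma P_id: assumes M: "M \<in> C" shows "P M = M"
proof -
  have e: "conj (rep z) M = M" if "z \<in> Zn H" for z
    using M rep[OF that] by (auto simp: C_def conj_comm)
  have f: "(\<Sum>z\<in>Zn H. conj (rep z) M $ i $ j) = of_nat (card (Zn H)) * M $ i $ j" for i j
    by (simp add: e)
  show ?thesis unfolding P_def using card_pos
    by (simp add: vec_eq_iff mat_entry f)
qed

lemma P_add: "P (M + M') = P M + P M'"
  unfolding P_def conj_def
  by (simp add: matrix_add_ldistrib matrix_add_rdist sum.distrib)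

lemma P_scal: "P (mat c ** M) = mat c ** P M"
proof -
  have "conj X (mat c ** M) = mat c ** conj X M" for X
    unfolding conj_def by (simp only: pull[of X]) (simp add: matrix_mul_assoc)
  hence "(\<Sum>z\<in>Zn H. conj (rep z) (mat c ** M)) = mat c ** (\<Sum>z\<in>Zn H. conj (rep z) M)"
    by (simp add: mm_sum_left Zn_finite)
  thus ?thesis unfolding P_def by (simp add: matrix_mul_assoc matmat mult.commute)
qed

definition fP :: "complex^('n\<times>'n) \<Rightarrow> complex^('n\<times>'n)" where
  "fP x = flat (P (unflat x))"

lemma fP_lin: "Vector_Spaces.linear (*s) (*s) fP"
  unfolding Vector_Spaces.linear_iff fP_def
  by (simp add: vec.vector_space_axioms unflat_add P_add flat_add unflat_scal P_scal flat_scal)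

lemma P_idem: "P (P M) = P M" using P_id P_in_C by blast

lemma fP_idem: "fP (fP x) = fP x"
  unfolding fP_def unflat_flat P_idem ..

lemma range_fP: "range fP = flat ` C"
proof
  show "range fP \<subseteq> flat ` C" unfolding fP_def using P_in_C by auto
  show "flat ` C \<subseteq> range fP"
  proof
    fix x assume "x \<in> flat ` C"
    then obtain M where M: "M \<in> C" "x = flat M" by auto
    hence "fP x = x" unfolding fP_def by (simp add: unflat_flat P_id)
    thus "x \<in> range fP" by (metis rangeI)
  qed
qed

lemma trz: assumes z: "z \<in> Zn H"
  shows "trace (rep z) * trace (matrix_inv (rep z)) = (if z = piPSL (mat 1) then of_nat (CARD('n) * CARD('n)) else 0)"
proof (cases "z = piPSL (mat 1)")
  case True
  then obtain c where c: "rep z = mat c" using class_triv rep[OF z] by auto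
  have cr: "c ^ CARD('n) = 1" using Zt_mat rep[OF z] c by auto
  have cn: "c \<noteq> 0" using cr by (rule root_nz)
  have "matrix_inv (rep z) = mat (inverse c)" unfolding c
    by (rule inv_unique) (simp_all add: matmat cn)
  thus ?thesis using True c cn by (simp add: trace_def mat_def)
next
  case False
  hence "\<not> (\<exists>c. rep z = mat c)" using class_triv rep[OF z] by auto
  thus ?thesis using tr0 rep[OF z] False by auto
qed

lemma trace_fP: "(\<Sum>p\<in>UNIV. fP (axis p 1) $ p) = of_nat (CARD('n) * CARD('n)) / of_nat (card (Zn H))"
proof -
  have e: "fP (axis (i,j) 1) $ (i,j) = 1 / of_nat (card (Zn H)) * (\<Sum>z\<in>Zn H. rep z $ i $ i * matrix_inv (rep z) $ j $ j)" for i j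
    unfolding fP_def P_def conj_def by (simp add: flat_def mat_entry E_entry)
  have sw: "(\<Sum>i\<in>UNIV. \<Sum>j\<in>UNIV. \<Sum>z\<in>Zn H. rep z $ i $ i * matrix_inv (rep z) $ j $ j)
      = (\<Sum>z\<in>Zn H. \<Sum>i\<in>UNIV. \<Sum>j\<in>UNIV. rep z $ i $ i * matrix_inv (rep z) $ j $ j)"
    by (subst sum.swap) (rule sum.cong[OF refl], rule sum.swap)
  have tp: "(\<Sum>z\<in>Zn H. \<Sum>i\<in>UNIV. \<Sum>j\<in>UNIV. rep z $ i $ i * matrix_inv (rep z) $ j $ j) = (\<Sum>z\<in>Zn H. trace (rep z) * trace (matrix_inv (rep z)))"
    by (simp add: trace_def sum_product)
  have fin: "(\<Sum>z\<in>Zn H. trace (rep z) * trace (matrix_inv (rep z))) = of_nat (CARD('n) * CARD('n))"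
  proof -
    have "(\<Sum>z\<in>Zn H. trace (rep z) * trace (matrix_inv (rep z))) = (\<Sum>z\<in>Zn H. if z = piPSL (mat 1) then of_nat (CARD('n) * CARD('n)) else 0)"
      by (intro sum.cong refl) (simp add: trz)
    also have "\<dots> = of_nat (CARD('n) * CARD('n))" using Zn_finite Zn_ne by simp
    finally show ?thesis .
  qed
  have "(\<Sum>p\<in>UNIV. fP (axis p 1) $ p) = (\<Sum>i\<in>UNIV. \<Sum>j\<in>UNIV. fP (axis (i,j) 1) $ (i,j))"
    by (subst UNIV_Times_UNIV[symmetric]) (rule sum.cartesian_product')
  also have "\<dots> = 1 / of_nat (card (Zn H)) * (\<Sum>i\<in>UNIV. \<Sum>j\<in>UNIV. \<Sum>z\<in>Zn H. rep z $ i $ i * matrix_inv (rep z) $ j $ j)"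
    unfolding e by (simp add: sum_distrib_left)
  also have "\<dots> = of_nat (CARD('n) * CARD('n)) / of_nat (card (Zn H))"
    unfolding sw tp fin by simp
  finally show ?thesis .
qed

lemma card_dim: "card (Zn H) * vec.dim (flat ` C) = CARD('n) * CARD('n)"
proof -
  have "(of_nat (vec.dim (flat ` C)) :: complex) = of_nat (CARD('n) * CARD('n)) / of_nat (card (Zn H))"
    using trace_idem[OF fP_lin fP_idem] trace_fP range_fP by simp
  hence "(of_nat (card (Zn H) * vec.dim (flat ` C)) :: complex) = of_nat (CARD('n) * CARD('n))"
    using card_pos by (simp add: field_simps)
  thus ?thesis using of_nat_eq_iff by blast
qed

lemma pre_eq: "{A \<in> SL. piPSL A \<in> Zn H} = Zt"
proof
  show "Zt \<subseteq> {A \<in> SL. piPSL A \<in> Zn H}" using Zn_eq Zt_def by auto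
  show "{A \<in> SL. piPSL A \<in> Zn H} \<subseteq> Zt"
  proof
    fix A assume "A \<in> {A \<in> SL. piPSL A \<in> Zn H}"
    then obtain B where B: "B \<in> Zt" "piPSL A = piPSL B" using Zn_eq by auto
    then obtain c where "c ^ CARD('n) = 1" "A = mat c ** B" using piPSL_eq by blast
    thus "A \<in> Zt" using Zt_scal B by simp
  qed
qed

lemma dir1: assumes irrZ: "irreducible_mats Zt" shows "card (Zn H) = CARD('n) * CARD('n)"
proof -
  let ?x = "flat (mat 1 :: complex^'n^'n)"
  have sc: "\<exists>c. M = mat c" if "M \<in> C" for M
  proof -
    have "\<forall>A\<in>Zt. A ** M = M ** A" using that unfolding C_def by simp
    thus ?thesis by (intro schur[OF irrZ]) auto
  qed
  have eq: "flat ` C = vec.span {?x}"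
  proof
    show "flat ` C \<subseteq> vec.span {?x}"
    proof
      fix y assume "y \<in> flat ` C"
      then obtain c where "y = flat (mat c)" using sc by blast
      hence "y = c *s ?x" using flat_scal[of c "mat 1"] by simp
      thus "y \<in> vec.span {?x}" unfolding vec.span_singleton by blast
    qed
    show "vec.span {?x} \<subseteq> flat ` C"
    proof
      fix y assume "y \<in> vec.span {?x}"
      then obtain k where "y = k *s ?x" by (auto simp: vec.span_singleton)
      hence "y = flat (mat k)" using flat_scal[of k "mat 1"] by (metis matrix_mul_rid)
      moreover have "mat k \<in> C" unfolding C_def by (simp add: mat_comm)
      ultimately show "y \<in> flat ` C" by blast
    qed
  qed
  have ind: "vec.independent {?x}"
    using flat_mat1_nz by (simp add: vec.independent_insert vec.span_empty)
  have "vec.dim (flat ` C) = 1"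
    unfolding eq vec.dim_span_eq_card_independent[OF ind] by simp
  thus ?thesis using card_dim by simp
qed

lemma dir2: assumes cd: "card (Zn H) = CARD('n) * CARD('n)" shows "irreducible_mats Zt"
proof -
  let ?B = "flat ` rep ` Zn H"
  have inj: "inj_on (flat \<circ> rep) (Zn H)" using inj_flat rep_inj
    by (metis comp_inj_on inj_on_subset subset_UNIV)
  have ind: "vec.independent ?B" using indep[OF Zn_finite order_refl] .
  have cB: "card ?B = CARD('n) * CARD('n)" using card_image[OF inj] cd by (simp add: image_comp)
  have "card ?B = vec.dim (UNIV :: (complex^('n\<times>'n)) set)"
    using cB by (simp add: vec.dim_UNIV card_cart_basis)
  hence spanU: "UNIV \<subseteq> vec.span ?B"
    using vec.card_eq_dim[of ?B UNIV] ind Zn_finite by simp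
  have decomp: "\<exists>d. \<forall>i j. M $ i $ j = (\<Sum>z\<in>Zn H. d z * rep z $ i $ j)" for M
  proof -
    have "flat M \<in> vec.span ?B" using spanU by auto
    then obtain u where u: "flat M = (\<Sum>v\<in>?B. u v *s v)"
      using vec.span_finite[of ?B] Zn_finite by auto
    also have "\<dots> = (\<Sum>z\<in>Zn H. u (flat (rep z)) *s flat (rep z))"
      using sum.reindex[OF inj, of "\<lambda>v. u v *s v"] by (simp add: image_comp)
    finally have "flat M $ (i,j) = (\<Sum>z\<in>Zn H. u (flat (rep z)) *s flat (rep z)) $ (i,j)" for i j by simp
    hence "M $ i $ j = (\<Sum>z\<in>Zn H. u (flat (rep z)) * rep z $ i $ j)" for i j
      by (simp add: flat_def sum_component)
    thus ?thesis by (intro exI[of _ "\<lambda>z. u (flat (rep z))"]) blast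
  qed
  show ?thesis unfolding irreducible_mats_def
  proof
    assume "\<exists>V. csubspace V \<and> V \<noteq> {0} \<and> V \<noteq> UNIV \<and> (\<forall>A\<in>Zt. \<forall>v\<in>V. A *v v \<in> V)"
    then obtain V where V: "csubspace V" "V \<noteq> {0}" "V \<noteq> UNIV" "\<forall>A\<in>Zt. \<forall>v\<in>V. A *v v \<in> V" by blast
    have closed: "M *v x \<in> V" if x: "x \<in> V" for M x
    proof -
      obtain d where d: "\<forall>i j. M $ i $ j = (\<Sum>z\<in>Zn H. d z * rep z $ i $ j)" using decomp by blast
      have "M *v x = (\<Sum>z\<in>Zn H. d z *s (rep z *v x))"
      proof -
        have "(M *v x) $ i = (\<Sum>z\<in>Zn H. d z *s (rep z *v x)) $ i" for i
        proof -
          have "(M *v x) $ i = (\<Sum>j\<in>UNIV. (\<Sum>z\<in>Zn H. d z * rep z $ i $ j) * x $ j)"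
            by (simp add: matrix_vector_mult_def d)
          also have "\<dots> = (\<Sum>j\<in>UNIV. \<Sum>z\<in>Zn H. d z * (rep z $ i $ j * x $ j))"
            by (simp add: sum_distrib_right sum_distrib_left algebra_simps)
          also have "\<dots> = (\<Sum>z\<in>Zn H. \<Sum>j\<in>UNIV. d z * (rep z $ i $ j * x $ j))"
            by (rule sum.swap)
          also have "\<dots> = (\<Sum>z\<in>Zn H. d z *s (rep z *v x)) $ i"
            by (simp add: sum_component matrix_vector_mult_def sum_distrib_left)
          finally show ?thesis .
        qed
        thus ?thesis by (simp add: vec_eq_iff)
      qed
      moreover have "(\<Sum>z\<in>Zn H. d z *s (rep z *v x)) \<in> V"
        using V(1) Zn_finite
      proof (rule csub_sum, intro ballI)
        fix z assume "z \<in> Zn H"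
        hence "rep z *v x \<in> V" using V(4) rep x by blast
        thus "d z *s (rep z *v x) \<in> V" using V(1) unfolding csubspace_def by blast
      qed
      ultimately show ?thesis by simp
    qed
    obtain x where x: "x \<in> V" "x \<noteq> 0" using V(1,2) unfolding csubspace_def by blast
    obtain k where k: "x $ k \<noteq> 0" using x(2) by (metis vec_eq_iff zero_index)
    have "y \<in> V" for y
    proof -
      let ?M = "(\<chi> i j. if j = k then y $ i / x $ k else 0) :: complex^'n^'n"
      have "(?M *v x) $ i = y $ i" for i
      proof -
        have "(?M *v x) $ i = (\<Sum>j\<in>UNIV. ?M $ i $ j * x $ j)" by (simp add: matrix_vector_mult_def)
        also have "\<dots> = (\<Sum>j\<in>UNIV. if j = k then y $ i / x $ k * x $ k else 0)"
          by (rule sum.cong) auto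
        also have "\<dots> = y $ i" using k by simp
        finally show ?thesis .
      qed
      hence "?M *v x = y" by (simp add: vec_eq_iff)
      thus ?thesis using closed[OF x(1), of ?M] by simp
    qed
    thus False using V(3) by blast
  qed
qed
end


theorem mainTheorem4:
  fixes H :: "(complex^'n::finite^'n) set"
  assumes "subgroup_SL H" and "irreducible_mats H"
  shows "card (Zn H) dvd CARD('n)^2
     \<and> (irreducible_PSL (Zn H) \<longleftrightarrow> card (Zn H) = CARD('n)^2)"
proof -
  interpret irrgrp H using assms by unfold_locales
  have "card (Zn H) dvd CARD('n)^2"
    using card_dim by (metis dvd_triv_left power2_eq_square)
  moreover have "irreducible_PSL (Zn H) \<longleftrightarrow> card (Zn H) = CARD('n)^2"
    unfolding irreducible_PSL_def pre_eq power2_eq_square using dir1 dir2 by blast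
  ultimately show ?thesis by blast
qed

end
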